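(* Let $J$ be a finite index set and for each $j\in J$ let $\Lambda_j\subset[0,2]$ be a finite multiset of numbers. Let $G$ and $G_j$ ($j\in J$) be finite simple graphs without isolated vertices such that: (a) $G_j\preccurlyeq_{t'_j} G\preccurlyeq_{t''_j} G_j$ for some $t'_j,t''_j\in\mathbb N_0$, and set $t_j:=t'_j+t''_j$; (b) $\Lambda_j$ has multiplicity $\mu_j$ in the spectrum of the standard Laplacian of $G_j$, with $\mu_j>t_j$; (c) the sets $\Lambda_j$, $j\in J$, are pairwise disjoint; (d) $|G|=\sum_{j\in J}(\mu_j-t_j)\,|\Lambda_j|$ (where $|\Lambda_j|$ counts elements with multiplicity). Then the spectrum of the standard Laplacian of $G$ (as a multiset) equals $\biguplus_{j\in J}\Lambda_j^{(\mu_j-t_j)}$, i.e. each element of $\Lambda_j$ occurring $s$ times in $\Lambda_j$ occurs exactly $s(\mu_j-t_j)$ times in the spectrum of $G$, and there are no other eigenvalues. The same statement holds for the signless standard Laplacians.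
   Context: All graphs are finite, simple, without isolated vertices; $|G|$ is the number of vertices. The standard Laplacian is $(\Delta_G f)(v)=f(v)-\frac{1}{\deg v}\sum_{u\in N_v}f(u)$ and the signless one $(\Delta_{G^+}f)(v)=f(v)+\frac{1}{\deg v}\sum_{u\in N_v}f(u)$ (equivalently the matrices $I\mp D^{-1/2}AD^{-1/2}$); their eigenvalues in ascending order with multiplicity are $\lambda_1(G)\le\dots\le\lambda_{|G|}(G)$, and spectra lie in $[0,2]$. Spectral preorder: $G\preccurlyeq_t G'$ ($t\in\mathbb N_0$) means $|G|\ge|G'|-t$ and $\lambda_k(G)\le\lambda_{k+t}(G')$ for all $1\le k\le|G'|-t$. A multiset $\Lambda$ has multiplicity $\mu$ in a spectrum $\sigma$ if each element of $\Lambda$ having multiplicity $s$ in $\Lambda$ has multiplicity at least $s\mu$ in $\sigma$; this is written $\Lambda^{(\mu)}\subset\sigma$, and $\Lambda^{(\mu)}$ denotes $\Lambda$ with all multiplicities multiplied by $\mu$; $\biguplus$ is the multiset union. *)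

theory Defs
  imports "Jordan_Normal_Form.Char_Poly" "HOL-Library.Multiset"
begin

text \<open>A finite simple graph on vertex set {0..<n}, given as (n, E) with E a symmetric,
irreflexive adjacency relation; no isolated vertices.\<close>
type_synonym graph = "nat \<times> (nat \<Rightarrow> nat \<Rightarrow> bool)"

definition nverts :: "graph \<Rightarrow> nat" where "nverts G = fst G"
definition adj :: "graph \<Rightarrow> nat \<Rightarrow> nat \<Rightarrow> bool" where "adj G = snd G"

definition graph_ok :: "graph \<Rightarrow> bool" where
  "graph_ok G \<longleftrightarrow>
     (\<forall>u v. adj G u v \<longrightarrow> u < nverts G \<and> v < nverts G) \<and>
     (\<forall>u v. adj G u v \<longrightarrow> adj G v u) \<and>
     (\<forall>u. \<not> adj G u u) \<and>
     (\<forall>u < nverts G. \<exists>v. adj G u v)"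

definition deg :: "graph \<Rightarrow> nat \<Rightarrow> nat" where
  "deg G u = card {v. v < nverts G \<and> adj G u v}"

definition lap_mat :: "bool \<Rightarrow> graph \<Rightarrow> real mat" where
  "lap_mat signless G = mat (nverts G) (nverts G) (\<lambda>(i, j).
     (if i = j then 1 else 0) +
     (if signless then 1 else -1) *
       (if adj G i j then 1 / sqrt (real (deg G i) * real (deg G j)) else 0))"

definition spec :: "bool \<Rightarrow> graph \<Rightarrow> real multiset" where
  "spec signless G = (let p = char_poly (lap_mat signless G) in
     (\<Sum>x\<in>{x. poly p x = 0}. replicate_mset (order x p) x))"

definition eig :: "bool \<Rightarrow> graph \<Rightarrow> nat \<Rightarrow> real" where
  "eig signless G k = sorted_list_of_multiset (spec signless G) ! (k - 1)"

definition spec_le :: "bool \<Rightarrow> graph \<Rightarrow> nat \<Rightarrow> graph \<Rightarrow> bool" where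
  "spec_le signless G t G' \<longleftrightarrow>
     int (nverts G) \<ge> int (nverts G') - int t \<and>
     (\<forall>k. 1 \<le> k \<and> int k \<le> int (nverts G') - int t \<longrightarrow>
        eig signless G k \<le> eig signless G' (k + t))"

definition has_mult :: "real multiset \<Rightarrow> nat \<Rightarrow> real multiset \<Rightarrow> bool" where
  "has_mult \<Lambda> \<mu> \<sigma> \<longleftrightarrow> (\<forall>x. count \<Lambda> x * \<mu> \<le> count \<sigma> x)"

end

theory Submission imports Defs begin


lemma order_linear_prod:
  fixes bs :: "'a::idom list"
  shows "order y (\<Prod>b\<leftarrow>bs. [:-b,1:]) = count (mset bs) y"
proof (induction bs)
  case Nil then show ?case by simp
next
  case (Cons b bs)
  have ne: "(\<Prod>b\<leftarrow>bs. [:-b,1:]) \<noteq> (0::'a poly)"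
    by (auto simp: prod_list_zero_iff)
  have ne2: "[:-b,1:] * (\<Prod>b\<leftarrow>bs. [:-b,1:]) \<noteq> 0" using ne by (intro no_zero_divisors) simp_all
  have o1: "order y [:-b,1:] = (if y = b then 1 else 0)"
  proof (cases "y = b")
    case True then show ?thesis using order_power_n_n[of y 1] by simp
  next
    case False then show ?thesis using order_0I[of "[:-b,1:]" y] by simp
  qed
  show ?case using order_mult[OF ne2] o1 Cons by auto
qed

lemma spec_prod:
  fixes bs :: "real list"
  assumes p: "p = (\<Prod>b\<leftarrow>bs. [:-b,1:])"
  shows "(\<Sum>x\<in>{x. poly p x = 0}. replicate_mset (order x p) x) = mset bs"
proof (rule multiset_eqI)
  fix y
  have ne: "p \<noteq> 0" unfolding p by (auto simp: prod_list_zero_iff)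
  have fin: "finite {x. poly p x = 0}" using poly_roots_finite[OF ne] .
  have "count (\<Sum>x\<in>{x. poly p x = 0}. replicate_mset (order x p) x) y
      = (\<Sum>x\<in>{x. poly p x = 0}. if x = y then order x p else 0)"
    by (auto simp: count_sum intro!: sum.cong)
  also have "\<dots> = (if poly p y = 0 then order y p else 0)"
    using fin by (simp add: sum.delta')
  also have "\<dots> = order y p" using order_0I by auto
  finally show "count (\<Sum>x\<in>{x. poly p x = 0}. replicate_mset (order x p) x) y = count (mset bs) y"
    unfolding p order_linear_prod .
qed



lemma herm_real_eig:
  fixes A :: "real mat" and a :: complex and w :: "nat \<Rightarrow> complex"
  assumes sym: "\<And>i j. i<n \<Longrightarrow> j<n \<Longrightarrow> A$$(i,j) = A$$(j,i)"
    and ev: "\<And>i. i<n \<Longrightarrow> (\<Sum>j<n. of_real (A$$(i,j)) * w j) = a * w i"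
    and nz: "k < n" "w k \<noteq> 0"
  shows "a = of_real (Re a)"
proof -
  define s where "s = (\<Sum>i<n. cnj (w i) * (\<Sum>j<n. of_real (A$$(i,j)) * w j))"
  define N where "N = (\<Sum>i<n. cnj (w i) * w i)"
  have s1: "s = a * N" unfolding s_def N_def using ev
    by (simp add: sum_distrib_left mult.left_commute)
  have "cnj s = (\<Sum>i<n. \<Sum>j<n. w i * of_real (A$$(i,j)) * cnj (w j))"
    unfolding s_def by (simp add: sum_distrib_left mult.assoc)
  also have "\<dots> = (\<Sum>j<n. \<Sum>i<n. w i * of_real (A$$(i,j)) * cnj (w j))"
    by (rule sum.swap)
  also have "\<dots> = s" unfolding s_def sum_distrib_left
    by (intro sum.cong refl) (simp add: sym mult.commute mult.left_commute)
  finally have cs: "cnj s = s" .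
  have Nr: "N = of_real (\<Sum>i<n. (cmod (w i))^2)"
    unfolding N_def of_real_sum by (intro sum.cong refl) (metis complex_norm_square mult.commute)
  have "(\<Sum>i<n. (cmod (w i))^2) > 0"
  proof -
    have "(\<Sum>i<n. (cmod (w i))^2) \<ge> (cmod (w k))^2"
      using nz(1) by (intro member_le_sum) auto
    moreover have "(cmod (w k))^2 > 0" using nz(2) by simp
    ultimately show ?thesis by linarith
  qed
  then have N0: "N \<noteq> 0" unfolding Nr by (metis of_real_eq_0_iff less_irrefl)
  have cN: "cnj N = N" by (simp only: Nr complex_cnj_complex_of_real)
  have aN: "a = s / N" using s1 N0 by (simp add: field_simps)
  have "cnj a = cnj s / cnj N" unfolding aN by (rule complex_cnj_divide)
  then have "cnj a = s / N" by (simp only: cs cN)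
  then have "cnj a = a" using aN by (simp only:)
  then have "Im (cnj a) = Im a" by simp
  then have "Im a = 0" by simp
  then show ?thesis by (simp add: complex_eq_iff)
qed



lemma sym_split:
  fixes A :: "real mat"
  assumes A: "A \<in> carrier_mat n n"
    and sym: "\<And>i j. i<n \<Longrightarrow> j<n \<Longrightarrow> A$$(i,j) = A$$(j,i)"
  shows "\<exists>bs. char_poly A = (\<Prod>b\<leftarrow>bs. [:-b,1:]) \<and> length bs = n"
proof -
  define C where "C = map_mat (complex_of_real) A"
  have C: "C \<in> carrier_mat n n" using A unfolding C_def by simp
  obtain as where cf: "char_poly C = (\<Prod>a\<leftarrow>as. [:-a,1:])" and len: "length as = n"
    using char_poly_factorized[OF C] by blast
  have real: "a = of_real (Re a)" if a: "a \<in> set as" for a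
  proof -
    have "poly (char_poly C) a = 0" unfolding cf using a
      by (simp add: poly_prod_list prod_list_zero_iff)
    then have "eigenvalue C a" using eigenvalue_root_char_poly[OF C] by simp
    then obtain v where v: "eigenvector C v a" unfolding eigenvalue_def by blast
    then have vc: "v \<in> carrier_vec n" "v \<noteq> 0\<^sub>v n" "C *\<^sub>v v = a \<cdot>\<^sub>v v"
      using C unfolding eigenvector_def by auto
    then obtain k where k: "k < n" "v $ k \<noteq> 0" by force
    show ?thesis
    proof (rule herm_real_eig[where n=n and A=A and a=a and w="\<lambda>i. v $ i", OF sym _ k])
      fix i assume i: "i < n"
      have "(C *\<^sub>v v) $ i = a * v $ i" using vc i by simp
      moreover have "(C *\<^sub>v v) $ i = (\<Sum>j<n. of_real (A$$(i,j)) * v $ j)"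
        using vc(1) i A C unfolding C_def
        by (simp add: scalar_prod_def lessThan_atLeast0)
      ultimately show "(\<Sum>j<n. of_real (A$$(i,j)) * v $ j) = a * v $ i" by simp
    qed auto
  qed
  interpret m: map_poly_inj_idom_hom complex_of_real ..
  define bs where "bs = map Re as"
  have "map_poly complex_of_real (\<Prod>b\<leftarrow>bs. [:-b,1:]) = (\<Prod>a\<leftarrow>as. [:-a,1:])"
    using real unfolding bs_def
  proof (induction as)
    case Nil then show ?case by simp
  next
    case (Cons a as)
    have "map_poly complex_of_real [:-Re a,1:] = [:-a,1:]"
      using Cons.prems[of a] by (simp add: map_poly_pCons)
    moreover have "map_poly complex_of_real (\<Prod>b\<leftarrow>map Re as. [:-b,1:]) = (\<Prod>a\<leftarrow>as. [:-a,1:])"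
      using Cons by simp
    ultimately show ?case
      using m.hom_mult[of "[:-Re a,1:]" "\<Prod>b\<leftarrow>map Re as. [:-b,1:]"] by simp
  qed
  also have "\<dots> = map_poly complex_of_real (char_poly A)"
    using cf of_real_hom.char_poly_hom[OF A, where ?'a=complex] unfolding C_def by metis
  finally have "char_poly A = (\<Prod>b\<leftarrow>bs. [:-b,1:])"
    using m.injectivity by metis
  then show ?thesis using len unfolding bs_def by (intro exI[of _ bs]) (simp add: bs_def)
qed



lemma count_card: "count (mset xs) x = card {i. i < length xs \<and> xs ! i = x}"
  by (simp add: count_mset count_list_eq_length_filter length_filter_conv_card eq_commute)

lemma lap_sym:
  assumes "graph_ok G" "i < nverts G" "j < nverts G"
  shows "lap_mat s G $$ (i,j) = lap_mat s G $$ (j,i)"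
proof -
  have "adj G i j = adj G j i" using assms(1) unfolding graph_ok_def by blast
  then show ?thesis using assms by (simp add: lap_mat_def mult.commute)
qed

lemma spec_mset:
  assumes "graph_ok G"
  shows "\<exists>bs. spec s G = mset bs \<and> length bs = nverts G"
proof -
  have A: "lap_mat s G \<in> carrier_mat (nverts G) (nverts G)" by (simp add: lap_mat_def)
  obtain bs where bs: "char_poly (lap_mat s G) = (\<Prod>b\<leftarrow>bs. [:-b,1:])" "length bs = nverts G"
    using sym_split[OF A lap_sym[OF assms]] by blast
  show ?thesis unfolding spec_def Let_def using spec_prod[OF bs(1)] bs(2) by auto
qed

lemma size_spec: "graph_ok G \<Longrightarrow> size (spec s G) = nverts G"
  by (metis spec_mset size_mset)

lemma block:
  fixes L :: "real list" and x :: real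
  assumes "sorted L"
  defines "a \<equiv> length (takeWhile (\<lambda>y. y < x) L)"
    and "b \<equiv> length (takeWhile (\<lambda>y. y \<le> x) L)"
  shows "\<And>i. i < a \<Longrightarrow> L ! i < x"
    and "\<And>i. a \<le> i \<Longrightarrow> i < length L \<Longrightarrow> x \<le> L ! i"
    and "\<And>i. i < b \<Longrightarrow> L ! i \<le> x"
    and "\<And>i. b \<le> i \<Longrightarrow> i < length L \<Longrightarrow> x < L ! i"
    and "b \<le> length L"
    and "count (mset L) x = b - a"
proof -
  show i: "\<And>i. i < a \<Longrightarrow> L ! i < x"
    unfolding a_def by (metis nth_mem set_takeWhileD takeWhile_nth)
  show ii: "\<And>i. a \<le> i \<Longrightarrow> i < length L \<Longrightarrow> x \<le> L ! i"
  proof -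
    fix i assume "a \<le> i" "i < length L"
    then have "a < length L" by simp
    then have "\<not> L ! a < x" unfolding a_def using nth_length_takeWhile by blast
    moreover have "L ! a \<le> L ! i" using sorted_nth_mono[OF assms(1) \<open>a \<le> i\<close> \<open>i < length L\<close>] .
    ultimately show "x \<le> L ! i" by simp
  qed
  show iii: "\<And>i. i < b \<Longrightarrow> L ! i \<le> x"
    unfolding b_def by (metis nth_mem set_takeWhileD takeWhile_nth)
  show iv: "\<And>i. b \<le> i \<Longrightarrow> i < length L \<Longrightarrow> x < L ! i"
  proof -
    fix i assume "b \<le> i" "i < length L"
    then have "b < length L" by simp
    then have "\<not> L ! b \<le> x" unfolding b_def using nth_length_takeWhile by blast
    moreover have "L ! b \<le> L ! i" using sorted_nth_mono[OF assms(1) \<open>b \<le> i\<close> \<open>i < length L\<close>] .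
    ultimately show "x < L ! i" by simp
  qed
  show bl: "b \<le> length L" unfolding b_def by (rule length_takeWhile_le)
  have "{i. i < length L \<and> L ! i = x} = {a..<b}"
  proof (rule Set.set_eqI, rule iffI)
    fix i assume "i \<in> {i. i < length L \<and> L ! i = x}"
    then have h: "i < length L" "L ! i = x" by auto
    have "a \<le> i" using i[of i] h by force
    moreover have "i < b" using iv[of i] h by force
    ultimately show "i \<in> {a..<b}" by simp
  next
    fix i assume "i \<in> {a..<b}"
    then show "i \<in> {i. i < length L \<and> L ! i = x}" using ii[of i] iii[of i] bl by force
  qed
  then show "count (mset L) x = b - a" by (simp add: count_card)
qed

lemma transfer:
  assumes gG: "graph_ok G" and gH: "graph_ok H"
    and le1: "spec_le s H t1 G" and le2: "spec_le s G t2 H"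
  shows "count (spec s H) x - (t1 + t2) \<le> count (spec s G) x"
proof -
  define L where "L = sorted_list_of_multiset (spec s H)"
  define M where "M = sorted_list_of_multiset (spec s G)"
  have lL: "length L = nverts H" unfolding L_def using size_spec[OF gH]
    by (metis mset_sorted_list_of_multiset size_mset)
  have lM: "length M = nverts G" unfolding M_def using size_spec[OF gG]
    by (metis mset_sorted_list_of_multiset size_mset)
  have sL: "sorted L" unfolding L_def by simp
  define a where "a = length (takeWhile (\<lambda>y. y < x) L)"
  define b where "b = length (takeWhile (\<lambda>y. y \<le> x) L)"
  note bl = block[OF sL, where x=x, folded a_def b_def]
  have eH: "eig s H k = L ! (k - 1)" for k unfolding eig_def L_def ..
  have eG: "eig s G k = M ! (k - 1)" for k unfolding eig_def M_def ..
  have Mi: "M ! i = x" if i: "a + t1 \<le> i" "i + t2 < b" for i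
  proof -
    have n1: "int (nverts G) \<ge> int (nverts H) - int t2" using le2 unfolding spec_le_def by blast
    have "eig s G (i+1) \<le> eig s H (i+1+t2)"
      using le2[unfolded spec_le_def, THEN conjunct2, rule_format, of "i+1"] bl(5) lL i by auto
    then have u: "M ! i \<le> L ! (i + t2)" unfolding eH eG by simp
    have "eig s H (i+1-t1) \<le> eig s G (i+1-t1+t1)"
      using le1[unfolded spec_le_def, THEN conjunct2, rule_format, of "i+1-t1"] i n1 bl(5) lL lM by auto
    then have l: "L ! (i - t1) \<le> M ! i" unfolding eH eG using i by simp
    have "L ! (i + t2) \<le> x" using bl(3) i by simp
    moreover have "x \<le> L ! (i - t1)" using bl(2)[of "i - t1"] i bl(5) by simp
    ultimately show ?thesis using u l by simp
  qed
  have "{a+t1..<b-t2} \<subseteq> {i. i < length M \<and> M ! i = x}"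
  proof
    fix i assume "i \<in> {a+t1..<b-t2}"
    then have i: "a + t1 \<le> i" "i + t2 < b" by auto
    have n1: "int (nverts G) \<ge> int (nverts H) - int t2" using le2 unfolding spec_le_def by blast
    then have "i < length M" using i bl(5) lL lM by linarith
    then show "i \<in> {i. i < length M \<and> M ! i = x}" using Mi[OF i] by simp
  qed
  then have "card {a+t1..<b-t2} \<le> count (mset M) x" unfolding count_card
    by (intro card_mono) auto
  moreover have "count (spec s H) x = b - a" using bl(6) unfolding L_def by simp
  ultimately show ?thesis unfolding M_def by simp
qed



theorem mainTheorem2:
  fixes signless :: bool
    and J :: "'j set"
    and \<Lambda> :: "'j \<Rightarrow> real multiset"
    and G :: graph
    and Gs :: "'j \<Rightarrow> graph"
    and t' t'' \<mu> :: "'j \<Rightarrow> nat"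
  assumes "finite J"
    and "\<And>j. j \<in> J \<Longrightarrow> set_mset (\<Lambda> j) \<subseteq> {0..2}"
    and "graph_ok G"
    and "\<And>j. j \<in> J \<Longrightarrow> graph_ok (Gs j)"
    and "\<And>j. j \<in> J \<Longrightarrow> spec_le signless (Gs j) (t' j) G \<and> spec_le signless G (t'' j) (Gs j)"
    and "\<And>j. j \<in> J \<Longrightarrow> has_mult (\<Lambda> j) (\<mu> j) (spec signless (Gs j))"
    and "\<And>j. j \<in> J \<Longrightarrow> \<mu> j > t' j + t'' j"
    and "\<And>i j. i \<in> J \<Longrightarrow> j \<in> J \<Longrightarrow> i \<noteq> j \<Longrightarrow> set_mset (\<Lambda> i) \<inter> set_mset (\<Lambda> j) = {}"
    and "nverts G = (\<Sum>j\<in>J. (\<mu> j - (t' j + t'' j)) * size (\<Lambda> j))"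
  shows "spec signless G = (\<Sum>j\<in>J. repeat_mset (\<mu> j - (t' j + t'' j)) (\<Lambda> j))"
proof -
  define R where "R = (\<Sum>j\<in>J. repeat_mset (\<mu> j - (t' j + t'' j)) (\<Lambda> j))"
  have each: "count (\<Lambda> j) x * (\<mu> j - (t' j + t'' j)) \<le> count (spec signless G) x"
    if j: "j \<in> J" for j x
  proof (cases "count (\<Lambda> j) x = 0")
    case True then show ?thesis by simp
  next
    case False
    define c where "c = count (\<Lambda> j) x"
    define t where "t = t' j + t'' j"
    have c1: "c \<ge> 1" using False unfolding c_def by simp
    have m: "c * \<mu> j \<le> count (spec signless (Gs j)) x"
      using assms(6)[OF j] unfolding has_mult_def c_def by blast
    have tr: "count (spec signless (Gs j)) x - t \<le> count (spec signless G) x"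
      unfolding t_def using transfer[OF assms(3) assms(4)[OF j]] assms(5)[OF j] by blast
    have "c * (\<mu> j - t) = c * \<mu> j - c * t" by (simp add: diff_mult_distrib2)
    also have "\<dots> \<le> c * \<mu> j - t" using c1 by (intro diff_le_mono2) simp
    also have "\<dots> \<le> count (spec signless G) x" using m tr by linarith
    finally show ?thesis unfolding c_def t_def by (simp add: mult.commute)
  qed
  have sub: "R \<subseteq># spec signless G"
  proof (rule mset_subset_eqI)
    fix x
    have cR: "count R x = (\<Sum>j\<in>J. (\<mu> j - (t' j + t'' j)) * count (\<Lambda> j) x)"
      unfolding R_def by (simp add: count_sum)
    show "count R x \<le> count (spec signless G) x"
    proof (cases "\<exists>j\<in>J. x \<in># \<Lambda> j")
      case True
      then obtain j0 where j0: "j0 \<in> J" "x \<in># \<Lambda> j0" by blast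
      have "count R x = (\<mu> j0 - (t' j0 + t'' j0)) * count (\<Lambda> j0) x
          + (\<Sum>j\<in>J - {j0}. (\<mu> j - (t' j + t'' j)) * count (\<Lambda> j) x)"
        unfolding cR using sum.remove[OF assms(1) j0(1)] by blast
      also have "(\<Sum>j\<in>J - {j0}. (\<mu> j - (t' j + t'' j)) * count (\<Lambda> j) x) = 0"
      proof (rule sum.neutral, rule ballI)
        fix j assume "j \<in> J - {j0}"
        then have "x \<notin># \<Lambda> j" using assms(8)[of j0 j] j0 by auto
        then show "(\<mu> j - (t' j + t'' j)) * count (\<Lambda> j) x = 0" by (simp add: not_in_iff)
      qed
      finally show ?thesis using each[OF j0(1), of x] by (simp add: mult.commute)
    next
      case False
      then have "count R x = 0" unfolding cR by (auto simp: not_in_iff intro!: sum.neutral)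
      then show ?thesis by simp
    qed
  qed
  have sz: "size R = size (spec signless G)"
    unfolding R_def size_spec[OF assms(3)] assms(9) by simp
  obtain D where D: "spec signless G = R + D" using sub by (metis subset_mset.le_iff_add)
  then have "size D = 0" using sz by simp
  then show ?thesis using D unfolding R_def by simp
qed

end
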